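(* For $n\geqslant 3$, $\det(M_n)=(-1)^{n-3}(n-2)^{n-2}(n^2-5n+5)$. In particular, the matrix $M_n$ is non-degenerate.
   Context: Write a permutation $\pi$ of $\{1,\ldots,n\}$ as $[\pi_1\ldots\pi_n]$ with $\pi_j=\pi(j)$. For $i\in\{2,\ldots,n\}$ and $k\in\{3,\ldots,n\}$, define $f_i^{2,k}:\mathrm{Sym}_n\to\mathbb{R}$ by $f_i^{2,k}(\pi)=1$ if $\pi_2=i$, $-1$ if $\pi_k=i$, and $0$ otherwise. For distinct $r,s\in\{2,\ldots,n\}$, $(1\,r\,s)$ denotes the $3$-cycle mapping $1\mapsto r$, $r\mapsto s$, $s\mapsto 1$. $M_n$ is the $(n-1)(n-2)\times(n-1)(n-2)$ matrix whose entry in row $f$ and column $\pi$ is $f(\pi)$, with rows and columns ordered as follows. Rows are in $n-1$ consecutive cohorts indexed by $i=2,3,\ldots,n$: cohort $i=2$ is $f_2^{2,3},f_2^{2,4},\ldots,f_2^{2,n}$; for $i\ge3$, cohort $i$ is $f_i^{2,i}$ followed by the $f_i^{2,k}$ with $k\in\{3,\ldots,n\}\setminus\{i\}$ in increasing order of $k$. Columns are in $n-1$ consecutive blocks indexed by $s=2,3,\ldots,n$: block $s$ is $(1\,r\,s)$ for $r\in\{2,\ldots,n\}\setminus\{s\}$ in increasing order of $r$. *)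

theory Defs
  imports "Jordan_Normal_Form.Determinant"
begin

text \<open>Permutations of {1..n} are represented as functions nat => nat (identity outside {1..n}).
  cyc3 r s is the 3-cycle (1 r s): 1 -> r, r -> s, s -> 1.\<close>
definition cyc3 :: "nat \<Rightarrow> nat \<Rightarrow> nat \<Rightarrow> nat" where
  "cyc3 r s j = (if j = 1 then r else if j = r then s else if j = s then 1 else j)"

definition fval :: "nat \<Rightarrow> nat \<Rightarrow> (nat \<Rightarrow> nat) \<Rightarrow> real" where
  "fval i k p = (if p 2 = i then 1 else if p k = i then -1 else 0)"

text \<open>Row order: cohorts i = 2..n; each row is a pair (i,k) standing for f_i^{2,k}.\<close>
definition row_list :: "nat \<Rightarrow> (nat \<times> nat) list" where
  "row_list n = concat (map (\<lambda>i. if i = 2 then map (\<lambda>k. (2, k)) [3..<n+1]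
       else (i, i) # map (\<lambda>k. (i, k)) (filter (\<lambda>k. k \<noteq> i) [3..<n+1])) [2..<n+1])"

text \<open>Column order: blocks s = 2..n; each column is a pair (r,s) standing for (1 r s).\<close>
definition col_list :: "nat \<Rightarrow> (nat \<times> nat) list" where
  "col_list n = concat (map (\<lambda>s. map (\<lambda>r. (r, s)) (filter (\<lambda>r. r \<noteq> s) [2..<n+1])) [2..<n+1])"

definition M :: "nat \<Rightarrow> real mat" where
  "M n = mat (length (row_list n)) (length (col_list n))
     (\<lambda>(a, b). fval (fst (row_list n ! a)) (snd (row_list n ! a))
                 (cyc3 (fst (col_list n ! b)) (snd (col_list n ! b))))"

end

theory Submission
  imports Defs
begin


lemma nth_concat_const:
  assumes "\<forall>x\<in>set xs. length (f x) = L" "p < length xs * L"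
  shows "concat (map f xs) ! p = f (xs ! (p div L)) ! (p mod L)"
  using assms
proof (induction xs arbitrary: p)
  case Nil then show ?case by simp
next
  case (Cons x xs)
  have L: "length (f x) = L" using Cons.prems by simp
  show ?case
  proof (cases "p < L")
    case True then show ?thesis using L by (simp add: nth_append)
  next
    case False
    then have p: "p - L < length xs * L" using Cons.prems by auto
    have "concat (map f xs) ! (p - L) = f (xs ! ((p - L) div L)) ! ((p - L) mod L)"
      using Cons.IH[OF _ p] Cons.prems by simp
    moreover have "L > 0" using Cons.prems by (cases L) auto
    ultimately show ?thesis using False L
      by (simp add: nth_append le_div_geq le_mod_geq)
  qed
qed

lemma length_concat_const:
  assumes "\<forall>x\<in>set xs. length (f x) = L"
  shows "length (concat (map f xs)) = length xs * L"
  using assms by (induction xs) auto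

lemma filter_neq_upt:
  assumes "a \<le> i" "i < b"
  shows "filter (\<lambda>k. k \<noteq> i) [a..<b] = [a..<i] @ [Suc i..<b]"
proof -
  have "[a..<b] = [a..<i] @ i # [Suc i..<b]"
    using assms by (metis le_trans less_imp_le_nat upt_conv_Cons upt_add_eq_append le_add_diff_inverse)
  then show ?thesis by (auto simp: filter_empty_conv intro!: filter_True)
qed

lemma filter_neq_upt_nth:
  assumes "a \<le> i" "i < b" "j < b - a - 1"
  shows "filter (\<lambda>k. k \<noteq> i) [a..<b] ! j = (if a + j < i then a + j else a + j + 1)"
  using assms by (auto simp add: filter_neq_upt nth_append)

lemma filter_neq_upt_len:
  assumes "a \<le> i" "i < b"
  shows "length (filter (\<lambda>k. k \<noteq> i) [a..<b]) = b - a - 1"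
  using assms by (simp add: filter_neq_upt)


declare upt_Suc[simp del]


definition rowp :: "nat \<Rightarrow> nat \<Rightarrow> nat \<times> nat" where
  "rowp a j = (if a = 0 then (2, j + 3) else if j = 0 then (a + 2, a + 2)
      else (a + 2, if j < a then j + 2 else j + 3))"

definition colp :: "nat \<Rightarrow> nat \<Rightarrow> nat \<times> nat" where
  "colp a j = (if a = 0 then (j + 3, 2) else if j = 0 then (2, a + 2)
      else (if j < a then j + 2 else j + 3, a + 2))"

lemma row_list_len: assumes "N \<ge> 1" shows "length (row_list (N+2)) = (N+1) * N"
  unfolding row_list_def
  by (subst length_concat_const[where L = N]) (auto simp: filter_neq_upt_len)

lemma col_list_len: assumes "N \<ge> 1" shows "length (col_list (N+2)) = (N+1) * N"
  unfolding col_list_def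
  by (subst length_concat_const[where L = N]) (auto simp: filter_neq_upt_len)

lemma row_list_nth: assumes "N \<ge> 1" "p < (N+1) * N"
  shows "row_list (N+2) ! p = rowp (p div N) (p mod N)"
proof -
  define a where "a = p div N"
  define j where "j = p mod N"
  have a: "a < N + 1" using assms unfolding a_def by (simp add: less_mult_imp_div_less)
  have j: "j < N" using assms unfolding j_def by simp
  have len: "length [2..<N+2+1] = N+1" by auto
  have "row_list (N+2) ! p = (\<lambda>i. if i = 2 then map (\<lambda>k. (2, k)) [3..<N+2+1]
       else (i, i) # map (\<lambda>k. (i, k)) (filter (\<lambda>k. k \<noteq> i) [3..<N+2+1])) ([2..<N+2+1] ! a) ! j"
    unfolding row_list_def a_def j_def
    apply (rule nth_concat_const)
     apply (auto simp: filter_neq_upt_len)[1]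
    apply (subst len)
    using assms(2) by simp
  also have "[2..<N+2+1] ! a = a + 2"
  proof -
    have "2 + a < N+2+1" using a by linarith
    from nth_upt[OF this] show ?thesis by (simp only: add.commute)
  qed
  also have "(\<lambda>i. if i = 2 then map (\<lambda>k. (2, k)) [3..<N+2+1]
       else (i, i) # map (\<lambda>k. (i, k)) (filter (\<lambda>k. k \<noteq> i) [3..<N+2+1])) (a+2) ! j = rowp a j"
  proof (cases "a = 0")
    case True then show ?thesis using j by (simp add: rowp_def)
  next
    case False
    show ?thesis
    proof (cases j)
      case 0 then show ?thesis using False by (simp add: rowp_def)
    next
      case (Suc j')
      have "filter (\<lambda>k. k \<noteq> a + 2) [3..<N+2+1] ! j' = (if 3 + j' < a + 2 then 3 + j' else 3 + j' + 1)"
        by (rule filter_neq_upt_nth) (use False a j Suc in auto)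
      then show ?thesis using False Suc a j
        by (simp add: rowp_def filter_neq_upt_len)
    qed
  qed
  finally show ?thesis unfolding a_def j_def .
qed

lemma col_list_nth: assumes "N \<ge> 1" "p < (N+1) * N"
  shows "col_list (N+2) ! p = colp (p div N) (p mod N)"
proof -
  define a where "a = p div N"
  define j where "j = p mod N"
  have a: "a < N + 1" using assms unfolding a_def by (simp add: less_mult_imp_div_less)
  have j: "j < N" using assms unfolding j_def by simp
  have len: "length [2..<N+2+1] = N+1" by auto
  have "col_list (N+2) ! p = (\<lambda>s. map (\<lambda>r. (r, s)) (filter (\<lambda>r. r \<noteq> s) [2..<N+2+1])) ([2..<N+2+1] ! a) ! j"
    unfolding col_list_def a_def j_def
    apply (rule nth_concat_const)
     apply (auto simp: filter_neq_upt_len)[1]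
    apply (subst len)
    using assms(2) by simp
  also have "[2..<N+2+1] ! a = a + 2"
  proof -
    have "2 + a < N+2+1" using a by linarith
    from nth_upt[OF this] show ?thesis by (simp only: add.commute)
  qed
  also have "(\<lambda>s. map (\<lambda>r. (r, s)) (filter (\<lambda>r. r \<noteq> s) [2..<N+2+1])) (a+2) ! j = colp a j"
  proof -
    have "filter (\<lambda>k. k \<noteq> a + 2) [2..<N+2+1] ! j = (if 2 + j < a + 2 then 2 + j else 2 + j + 1)"
      by (rule filter_neq_upt_nth) (use a j in auto)
    then show ?thesis using a j
      by (auto simp: colp_def filter_neq_upt_len)
  qed
  finally show ?thesis unfolding a_def j_def .
qed



definition uidx :: "nat \<Rightarrow> nat \<Rightarrow> nat \<Rightarrow> nat" where
  "uidx N a j = (if a = 0 then 0 else if j \<noteq> 0 then a else a + N)"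

definition vent :: "nat \<Rightarrow> nat \<Rightarrow> nat \<Rightarrow> nat \<Rightarrow> real" where
  "vent N x b l = (if x = 0 then (if b \<noteq> 0 \<and> l \<noteq> 0 then 1 else 0)
  else if x \<le> N then (if b = x \<and> l = 0 then 1 else 0)
  else (if b = 0 then (if x - N - 1 = l then 1 else 0) - 1
    else if l = 0 then (if x - N = b then 3 else 0) - 1
    else (if x - N - 1 = (if l < b then l - 1 else l) then 1 else 0) + (if x - N = b then 1 else 0) - 1))"

lemma key_entry:
  assumes "a \<le> N" "j < N" "b \<le> N" "l < N"
  shows "fval (fst (rowp a j)) (snd (rowp a j)) (cyc3 (fst (colp b l)) (snd (colp b l)))
     = vent N (uidx N a j) b l - (if a = b \<and> j = l then 1 else 0)"
  using assms
  apply (cases "a=0"; cases "j=0"; cases "b=0"; cases "l=0")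
  apply (simp_all add: rowp_def colp_def uidx_def)
  apply (simp_all add: fval_def cyc3_def vent_def)
  apply presburger+
  done



lemma det_four_block_id:
  fixes B :: "'a :: idom mat"
  assumes B: "B \<in> carrier_mat k l" and C: "C \<in> carrier_mat l k" and D: "D \<in> carrier_mat l l"
  shows "det (four_block_mat (1\<^sub>m k) B C D) = det (D - C * B)"
proof -
  let ?L = "four_block_mat (1\<^sub>m k) (0\<^sub>m k l) C (1\<^sub>m l)"
  let ?R = "four_block_mat (1\<^sub>m k) B (0\<^sub>m l k) (D - C * B)"
  have CB: "C * B \<in> carrier_mat l l" using B C by auto
  have e: "C * B + 1\<^sub>m l * (D - C * B) = D"
    by (rule eq_matI) (use B C D CB in auto)
  have "?L * ?R = four_block_mat (1\<^sub>m k) B C D"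
    apply (subst mult_four_block_mat[of _ k k _ l _ l _ _ k _ l])
    using B C D e by auto
  moreover have "det ?L = 1"
    by (subst det_four_block_mat_upper_right_zero[of _ k _ l]) (use C in auto)
  moreover have "det ?R = det (D - C * B)"
    by (subst det_four_block_mat_lower_left_zero[of _ k _ l]) (use B C D in auto)
  moreover have "det (?L * ?R) = det ?L * det ?R"
    by (rule det_mult[of _ "k+l"]) (use B C D in auto)
  ultimately show ?thesis by simp
qed

lemma sylvester_det:
  fixes U :: "'a :: idom mat"
  assumes U: "U \<in> carrier_mat m q" and V: "V \<in> carrier_mat q m"
  shows "det (1\<^sub>m m - U * V) = det (1\<^sub>m q - V * U)"
proof -
  let ?X = "four_block_mat (1\<^sub>m m) U V (1\<^sub>m q)"
  let ?Y = "four_block_mat (1\<^sub>m m) (0\<^sub>m m q) (- V) (1\<^sub>m q)"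
  have "det ?X = det (1\<^sub>m q - V * U)" by (rule det_four_block_id) (use U V in auto)
  moreover have "?X * ?Y = four_block_mat (1\<^sub>m m - U * V) U (0\<^sub>m q m) (1\<^sub>m q)"
    apply (subst mult_four_block_mat[of _ m m _ q _ q _ _ m _ q])
    using U V by (auto intro!: eq_matI)
  moreover have "det ?Y = 1"
    by (subst det_four_block_mat_upper_right_zero[of _ m _ q]) (use V in auto)
  moreover have "det (four_block_mat (1\<^sub>m m - U * V) U (0\<^sub>m q m) (1\<^sub>m q)) = det (1\<^sub>m m - U * V)"
    by (subst det_four_block_mat_lower_left_zero[of _ m _ q]) (use U V in auto)
  moreover have "det (?X * ?Y) = det ?X * det ?Y"
    by (rule det_mult[of _ "m+q"]) (use U V in auto)
  ultimately show ?thesis by simp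
qed



declare upt_Suc[simp del]

definition Umat :: "nat \<Rightarrow> real mat" where
  "Umat N = mat ((N+1)*N) (2*N+1) (\<lambda>(c,x). if x = uidx N (c div N) (c mod N) then 1 else 0)"

definition Vmat :: "nat \<Rightarrow> real mat" where
  "Vmat N = mat (2*N+1) ((N+1)*N) (\<lambda>(x,c). vent N x (c div N) (c mod N))"

lemma Umat_carrier: "Umat N \<in> carrier_mat ((N+1)*N) (2*N+1)" by (simp add: Umat_def)
lemma Vmat_carrier: "Vmat N \<in> carrier_mat (2*N+1) ((N+1)*N)" by (simp add: Vmat_def)

lemma sum_divmod:
  fixes g :: "nat \<Rightarrow> nat \<Rightarrow> 'a :: comm_monoid_add"
  assumes "N > 0"
  shows "(\<Sum>c<K*N. g (c div N) (c mod N)) = (\<Sum>a<K. \<Sum>j<N. g a j)"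
proof -
  have "(\<Sum>c<K*N. g (c div N) (c mod N)) = (\<Sum>a<K. \<Sum>c\<in>{a*N..<a*N+N}. g (c div N) (c mod N))"
    by (rule sum.nat_group[symmetric])
  also have "\<dots> = (\<Sum>a<K. \<Sum>j<N. g a j)"
  proof (rule sum.cong[OF refl])
    fix a
    have "(\<Sum>c\<in>{a*N..<a*N+N}. g (c div N) (c mod N)) = (\<Sum>j\<in>{0..<N}. g ((j + a*N) div N) ((j+a*N) mod N))"
      using sum.shift_bounds_nat_ivl[of "\<lambda>c. g (c div N) (c mod N)" 0 "a*N" N] by (simp add: add.commute)
    also have "\<dots> = (\<Sum>j<N. g a j)" using assms by (auto intro!: sum.cong simp: atLeast0LessThan)
    finally show "(\<Sum>c\<in>{a*N..<a*N+N}. g (c div N) (c mod N)) = (\<Sum>j<N. g a j)" .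
  qed
  finally show ?thesis .
qed

lemma sum_ind_mult:
  assumes "finite S" "u \<in> S"
  shows "(\<Sum>x\<in>S. (if x = u then 1 else 0) * f x) = (f u :: real)"
proof -
  have "(\<Sum>x\<in>S. (if x = u then 1 else 0) * f x) = (\<Sum>x\<in>S. if x = u then f x else 0)"
    by (intro sum.cong) auto
  also have "\<dots> = f u" using assms by simp
  finally show ?thesis .
qed

lemma uidx_lt: "a \<le> N \<Longrightarrow> uidx N a j < 2*N+1" by (auto simp: uidx_def)

lemma UV_entry:
  assumes "N \<ge> 1" "p < (N+1)*N" "c < (N+1)*N"
  shows "(Umat N * Vmat N) $$ (p,c) = vent N (uidx N (p div N) (p mod N)) (c div N) (c mod N)"
proof -
  have a: "p div N \<le> N" using less_mult_imp_div_less[OF assms(2)] by simp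
  have "(Umat N * Vmat N) $$ (p,c) = (\<Sum>x\<in>{0..<2*N+1}. (if x = uidx N (p div N) (p mod N) then 1 else 0) * vent N x (c div N) (c mod N))"
    using assms by (simp add: Umat_def Vmat_def scalar_prod_def)
  also have "\<dots> = vent N (uidx N (p div N) (p mod N)) (c div N) (c mod N)"
    by (rule sum_ind_mult) (use uidx_lt[OF a] in auto)
  finally show ?thesis .
qed

lemma M_eq:
  assumes "N \<ge> 1"
  shows "M (N+2) = Umat N * Vmat N - 1\<^sub>m ((N+1)*N)"
proof (rule eq_matI)
  show "dim_row (M (N + 2)) = dim_row (Umat N * Vmat N - 1\<^sub>m ((N + 1) * N))"
    using row_list_len[OF assms] by (simp add: M_def Umat_def)
  show "dim_col (M (N + 2)) = dim_col (Umat N * Vmat N - 1\<^sub>m ((N + 1) * N))"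
    using col_list_len[OF assms] by (simp add: M_def Vmat_def)
  fix p c assume p: "p < dim_row (Umat N * Vmat N - 1\<^sub>m ((N + 1) * N))"
    and c: "c < dim_col (Umat N * Vmat N - 1\<^sub>m ((N + 1) * N))"
  then have p: "p < (N+1)*N" and c: "c < (N+1)*N" by (simp_all add: Umat_def)
  have a: "p div N \<le> N" "c div N \<le> N" using less_mult_imp_div_less[OF p] less_mult_imp_div_less[OF c] by simp_all
  have j: "p mod N < N" "c mod N < N" using assms by simp_all
  have eq: "(p div N = c div N \<and> p mod N = c mod N) = (p = c)"
    by (metis div_mult_mod_eq)
  have "M (N+2) $$ (p,c) = fval (fst (rowp (p div N) (p mod N))) (snd (rowp (p div N) (p mod N)))
      (cyc3 (fst (colp (c div N) (c mod N))) (snd (colp (c div N) (c mod N))))"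
    using row_list_len[OF assms] col_list_len[OF assms] row_list_nth[OF assms p] col_list_nth[OF assms c] p c
    by (simp add: M_def)
  also have "\<dots> = vent N (uidx N (p div N) (p mod N)) (c div N) (c mod N) - (if p = c then 1 else 0)"
    using key_entry[OF a(1) j(1) a(2) j(2)] eq by simp
  also have "\<dots> = (Umat N * Vmat N - 1\<^sub>m ((N + 1) * N)) $$ (p,c)"
    using UV_entry[OF assms p c] p c by (simp add: Umat_def Vmat_def)
  finally show "M (N+2) $$ (p,c) = (Umat N * Vmat N - 1\<^sub>m ((N + 1) * N)) $$ (p,c)" .
qed

lemma VU_sum:
  assumes "N \<ge> 1" "x < 2*N+1" "y < 2*N+1"
  shows "(Vmat N * Umat N) $$ (x,y) = (\<Sum>a<N+1. \<Sum>j<N. vent N x a j * (if y = uidx N a j then 1 else 0))"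
proof -
  have "(Vmat N * Umat N) $$ (x,y) = (\<Sum>c<(N+1)*N. vent N x (c div N) (c mod N) * (if y = uidx N (c div N) (c mod N) then 1 else 0))"
    using assms by (simp add: Umat_def Vmat_def scalar_prod_def atLeast0LessThan)
  also have "\<dots> = (\<Sum>a<N+1. \<Sum>j<N. vent N x a j * (if y = uidx N a j then 1 else 0))"
    by (rule sum_divmod[where g = "\<lambda>a j. vent N x a j * (if y = uidx N a j then 1 else 0)"]) (use assms in auto)
  finally show ?thesis .
qed

lemma sum_cond_pull: "(\<Sum>j\<in>S. if P then g j else 0) = (if P then (\<Sum>j\<in>S. g j) else (0::real))"
  by auto

lemma VU_0:
  assumes "N \<ge> 1" "x < 2*N+1"
  shows "(Vmat N * Umat N) $$ (x,0) = (\<Sum>j<N. vent N x 0 j)"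
proof -
  have "(Vmat N * Umat N) $$ (x,0) = (\<Sum>a<N+1. \<Sum>j<N. vent N x a j * (if 0 = uidx N a j then 1 else 0))"
    by (rule VU_sum) (use assms in auto)
  also have "\<dots> = (\<Sum>a<N+1. \<Sum>j<N. if a = 0 then vent N x a j else 0)"
    by (intro sum.cong refl) (auto simp: uidx_def)
  also have "\<dots> = (\<Sum>a<N+1. if a = 0 then (\<Sum>j<N. vent N x a j) else 0)"
    by (simp only: sum_cond_pull)
  also have "\<dots> = (\<Sum>j<N. vent N x 0 j)"
    by (simp only: sum.delta finite_lessThan) simp
  finally show ?thesis .
qed

lemma VU_s:
  assumes "N \<ge> 1" "x < 2*N+1" "s < N"
  shows "(Vmat N * Umat N) $$ (x,s+1) = (\<Sum>j\<in>{1..<N}. vent N x (s+1) j)"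
proof -
  have "(Vmat N * Umat N) $$ (x,s+1) = (\<Sum>a<N+1. \<Sum>j<N. vent N x a j * (if s+1 = uidx N a j then 1 else 0))"
    by (rule VU_sum) (use assms in auto)
  also have "\<dots> = (\<Sum>a<N+1. \<Sum>j<N. if a = s+1 then (if j \<noteq> 0 then vent N x a j else 0) else 0)"
    using assms by (intro sum.cong refl) (auto simp: uidx_def)
  also have "\<dots> = (\<Sum>a<N+1. if a = s+1 then (\<Sum>j<N. if j \<noteq> 0 then vent N x a j else 0) else 0)"
    by (simp only: sum_cond_pull)
  also have "\<dots> = (\<Sum>j<N. if j \<noteq> 0 then vent N x (s+1) j else 0)"
    by (simp only: sum.delta finite_lessThan) (use assms(3) in simp)
  also have "\<dots> = (\<Sum>j\<in>{j\<in>{..<N}. j \<noteq> 0}. vent N x (s+1) j)"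
    by (rule sum.inter_filter[symmetric]) simp
  also have "{j\<in>{..<N}. j \<noteq> 0} = {1..<N}" by auto
  finally show ?thesis .
qed

lemma VU_t:
  assumes "N \<ge> 1" "x < 2*N+1" "t < N"
  shows "(Vmat N * Umat N) $$ (x,N+1+t) = vent N x (t+1) 0"
proof -
  have "(Vmat N * Umat N) $$ (x,N+1+t) = (\<Sum>a<N+1. \<Sum>j<N. vent N x a j * (if N+1+t = uidx N a j then 1 else 0))"
    by (rule VU_sum) (use assms in auto)
  also have "\<dots> = (\<Sum>a<N+1. \<Sum>j<N. if a = t+1 then (if j = 0 then vent N x a j else 0) else 0)"
    using assms by (intro sum.cong refl) (auto simp: uidx_def)
  also have "\<dots> = (\<Sum>a<N+1. if a = t+1 then (\<Sum>j<N. if j = 0 then vent N x a j else 0) else 0)"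
    by (simp only: sum_cond_pull)
  also have "\<dots> = (\<Sum>j<N. if j = 0 then vent N x (t+1) j else 0)"
    by (simp only: sum.delta finite_lessThan) (use assms(3) in simp)
  also have "\<dots> = vent N x (t+1) 0"
    by (simp only: sum.delta finite_lessThan) (use assms in simp)
  finally show ?thesis .
qed

lemma rho_sum:
  assumes "t < N" "s < N"
  shows "(\<Sum>j\<in>{1..<N}. (if t = (if j < Suc s then j - 1 else j) then 1 else 0::real)) = (if t = s then 0 else 1)"
proof -
  have "(\<Sum>j\<in>{1..<N}. (if t = (if j < Suc s then j - 1 else j) then 1 else 0::real))
      = (\<Sum>j\<in>{j\<in>{1..<N}. t = (if j < Suc s then j - 1 else j)}. 1)"
    by (rule sum.inter_filter[symmetric]) simp
  also have "{j\<in>{1..<N}. t = (if j < Suc s then j - 1 else j)} = (if t < s then {t+1} else if s < t then {t} else {})"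
    using assms by auto
  finally show ?thesis by auto
qed

definition Kent :: "nat \<Rightarrow> nat \<Rightarrow> nat \<Rightarrow> real" where
  "Kent N x y = (if x = 0 then (if y = 0 then 1 else if y \<le> N then -(real N - 1) else 0)
  else if x \<le> N then (if y = 0 then 0 else if y \<le> N then (if x = y then 1 else 0) else (if x + N = y then -1 else 0))
  else (if y = 0 then real N - 1 else if y \<le> N then (if x = y + N then 0 else real N - 2) else (if x = y then -1 else 1)))"

lemma K_col0:
  assumes "N \<ge> 1" "x < 2*N+1"
  shows "(1\<^sub>m (2*N+1) - Vmat N * Umat N) $$ (x,0) = Kent N x 0"
proof -
  have e: "(1\<^sub>m (2*N+1) - Vmat N * Umat N) $$ (x,0) = (if x = 0 then 1 else 0) - (\<Sum>j<N. vent N x 0 j)"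
    using assms VU_0[OF assms] by (simp add: Umat_def Vmat_def)
  show ?thesis
  proof (cases "x \<le> N")
    case True then show ?thesis unfolding e by (simp add: vent_def Kent_def)
  next
    case False
    have "(\<Sum>j<N. vent N x 0 j) = (\<Sum>j<N. (if x - N - 1 = j then 1 else 0) - 1)"
      using False by (intro sum.cong) (auto simp: vent_def)
    also have "\<dots> = 1 - real N" using False assms by (simp add: sum_subtractf)
    finally show ?thesis unfolding e using False by (simp add: Kent_def)
  qed
qed

lemma K_cols:
  assumes "N \<ge> 1" "x < 2*N+1" "s < N"
  shows "(1\<^sub>m (2*N+1) - Vmat N * Umat N) $$ (x,s+1) = Kent N x (s+1)"
proof -
  have e: "(1\<^sub>m (2*N+1) - Vmat N * Umat N) $$ (x,s+1) = (if x = s+1 then 1 else 0) - (\<Sum>j\<in>{1..<N}. vent N x (s+1) j)"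
    using assms VU_s[OF assms] by (simp add: Umat_def Vmat_def)
  show ?thesis
  proof (cases "x = 0")
    case True
    have "(\<Sum>j\<in>{1..<N}. vent N x (s+1) j) = (\<Sum>j\<in>{1..<N}. 1)"
      using True by (intro sum.cong) (auto simp: vent_def)
    then show ?thesis unfolding e using True assms by (simp add: Kent_def of_nat_diff)
  next
    case x0: False
    show ?thesis
    proof (cases "x \<le> N")
      case True
      have "(\<Sum>j\<in>{1..<N}. vent N x (s+1) j) = 0"
        using True x0 by (intro sum.neutral) (auto simp: vent_def)
      then show ?thesis unfolding e using True x0 assms by (simp add: Kent_def)
    next
      case False
      define t where "t = x - N - 1"
      have t: "t < N" "x = N + 1 + t" using False assms unfolding t_def by auto
      have "(\<Sum>j\<in>{1..<N}. vent N x (s+1) j) = (\<Sum>j\<in>{1..<N}. (if t = (if j < Suc s then j - 1 else j) then 1 else 0) + ((if t = s then 1 else 0) - 1))"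
        using t by (intro sum.cong) (auto simp: vent_def)
      also have "\<dots> = (if t = s then 0 else 1) + (real N - 1) * ((if t = s then 1 else 0) - 1)"
        using rho_sum[OF t(1) assms(3)] assms by (simp add: sum.distrib of_nat_diff)
      finally show ?thesis unfolding e using t assms by (auto simp: Kent_def)
    qed
  qed
qed

lemma K_colt:
  assumes "N \<ge> 1" "x < 2*N+1" "t < N"
  shows "(1\<^sub>m (2*N+1) - Vmat N * Umat N) $$ (x,N+1+t) = Kent N x (N+1+t)"
proof -
  have e: "(1\<^sub>m (2*N+1) - Vmat N * Umat N) $$ (x,N+1+t) = (if x = N+1+t then 1 else 0) - vent N x (t+1) 0"
    using assms VU_t[OF assms] by (simp add: Umat_def Vmat_def)
  show ?thesis unfolding e using assms by (auto simp: Kent_def vent_def)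
qed

lemma K_entry:
  assumes "N \<ge> 1" "x < 2*N+1" "y < 2*N+1"
  shows "(1\<^sub>m (2*N+1) - Vmat N * Umat N) $$ (x,y) = Kent N x y"
proof -
  consider "y = 0" | s where "s < N" "y = s + 1" | t where "t < N" "y = N + 1 + t"
  proof -
    assume h0: "y = 0 \<Longrightarrow> thesis" and h1: "\<And>s. s < N \<Longrightarrow> y = s + 1 \<Longrightarrow> thesis"
      and h2: "\<And>t. t < N \<Longrightarrow> y = N + 1 + t \<Longrightarrow> thesis"
    show thesis
    proof (cases "y = 0")
      case True then show ?thesis by (rule h0)
    next
      case False
      show ?thesis
      proof (cases "y \<le> N")
        case True then show ?thesis using False by (intro h1[of "y - 1"]) auto
      next
        case F2: False then show ?thesis using assms(3) by (intro h2[of "y - N - 1"]) auto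
      qed
    qed
  qed
  then show ?thesis
    by cases (use K_col0[OF assms(1,2)] K_cols[OF assms(1,2)] K_colt[OF assms(1,2)] in auto)
qed

lemma split_first:
  fixes A :: "'a :: {zero,one} mat"
  assumes "A \<in> carrier_mat (1+k) (1+k)" "A$$(0,0) = 1"
  shows "A = four_block_mat (1\<^sub>m 1) (mat 1 k (\<lambda>(_,y). A$$(0,y+1))) (mat k 1 (\<lambda>(x,_). A$$(x+1,0)))
              (mat k k (\<lambda>(x,y). A$$(x+1,y+1)))"
  using assms by (auto intro!: eq_matI)

definition Am :: "nat \<Rightarrow> real mat" where
  "Am N = mat N N (\<lambda>(i,j). (if i = j then 0 else real N - 2) + (real N - 1)^2)"
definition Bm :: "nat \<Rightarrow> real mat" where
  "Bm N = mat N N (\<lambda>(i,j). if i = j then -1 else 1)"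

lemma K_block:
  assumes "N \<ge> 1"
  shows "det (1\<^sub>m (2*N+1) - Vmat N * Umat N) = det (four_block_mat (1\<^sub>m N) (- 1\<^sub>m N) (Am N) (Bm N))"
proof -
  let ?K = "1\<^sub>m (2*N+1) - Vmat N * Umat N"
  let ?K12 = "mat 1 (2*N) (\<lambda>(_,y). ?K$$(0,y+1))"
  let ?K21 = "mat (2*N) 1 (\<lambda>(x,_). ?K$$(x+1,0))"
  let ?K22 = "mat (2*N) (2*N) (\<lambda>(x,y). ?K$$(x+1,y+1))"
  have Kc: "?K \<in> carrier_mat (1+2*N) (1+2*N)" unfolding carrier_mat_def by (simp add: Umat_def Vmat_def)
  have K00: "?K$$(0,0) = 1" using K_entry[OF assms, of 0 0] by (simp add: Kent_def)
  have "det ?K = det (four_block_mat (1\<^sub>m 1) ?K12 ?K21 ?K22)"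
    using split_first[OF Kc K00] by simp
  also have "\<dots> = det (?K22 - ?K21 * ?K12)"
    by (rule det_four_block_id) auto
  also have "?K22 - ?K21 * ?K12 = four_block_mat (1\<^sub>m N) (- 1\<^sub>m N) (Am N) (Bm N)"
  proof (rule eq_matI)
    fix x y assume "x < dim_row (four_block_mat (1\<^sub>m N) (- 1\<^sub>m N) (Am N) (Bm N))"
      "y < dim_col (four_block_mat (1\<^sub>m N) (- 1\<^sub>m N) (Am N) (Bm N))"
    then have x: "x < 2*N" and y: "y < 2*N" by (auto simp: Am_def Bm_def)
    have "(?K22 - ?K21 * ?K12) $$ (x,y) = Kent N (x+1) (y+1) - Kent N (x+1) 0 * Kent N 0 (y+1)"
      using x y K_entry[OF assms] by (simp add: scalar_prod_def)
    also have "\<dots> = four_block_mat (1\<^sub>m N) (- 1\<^sub>m N) (Am N) (Bm N) $$ (x,y)"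
      using x y assms by (auto simp: Kent_def Am_def Bm_def power2_eq_square algebra_simps of_nat_diff)
    finally show "(?K22 - ?K21 * ?K12) $$ (x,y) = four_block_mat (1\<^sub>m N) (- 1\<^sub>m N) (Am N) (Bm N) $$ (x,y)" .
  qed (auto simp: Am_def Bm_def)
  finally show ?thesis .
qed

lemma det_aIbJ:
  fixes a b :: real
  assumes "a \<noteq> 0"
  shows "det (mat k k (\<lambda>(i,j). (if i = j then a else 0) + b)) = a^k * (1 + real k * b / a)"
proof -
  let ?U = "mat k 1 (\<lambda>_. - b / a) :: real mat"
  let ?V = "mat 1 k (\<lambda>_. 1) :: real mat"
  have "mat k k (\<lambda>(i,j). (if i = j then a else 0) + b) = a \<cdot>\<^sub>m (1\<^sub>m k - ?U * ?V)"
    using assms by (auto intro!: eq_matI simp: scalar_prod_def field_simps)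
  then have "det (mat k k (\<lambda>(i,j). (if i = j then a else 0) + b)) = a^k * det (1\<^sub>m k - ?U * ?V)"
    by simp
  also have "det (1\<^sub>m k - ?U * ?V) = det (1\<^sub>m 1 - ?V * ?U)"
    by (rule sylvester_det) auto
  also have "det (1\<^sub>m 1 - ?V * ?U) = (1\<^sub>m 1 - ?V * ?U) $$ (0,0)"
    by (rule det_single) auto
  also have "\<dots> = 1 + real k * b / a"
    by (simp add: scalar_prod_def)
  finally show ?thesis .
qed

lemma det_final_block:
  assumes "N \<ge> 1"
  shows "det (four_block_mat (1\<^sub>m N) (- 1\<^sub>m N) (Am N) (Bm N)) = (- real N)^N * (1 - real N * (real N - 1))"
proof -
  have "det (four_block_mat (1\<^sub>m N) (- 1\<^sub>m N) (Am N) (Bm N)) = det (Bm N - Am N * (- 1\<^sub>m N))"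
    by (rule det_four_block_id) (auto simp: Am_def Bm_def)
  also have "Bm N - Am N * (- 1\<^sub>m N) = mat N N (\<lambda>(i,j). (if i = j then - real N else 0) + real N * (real N - 1))"
  proof (rule eq_matI)
    fix i j assume "i < dim_row (mat N N (\<lambda>(i,j). (if i = j then - real N else 0) + real N * (real N - 1)))"
      "j < dim_col (mat N N (\<lambda>(i,j). (if i = j then - real N else 0) + real N * (real N - 1)))"
    then have ij: "i < N" "j < N" by auto
    have "(Am N * (- 1\<^sub>m N)) $$ (i,j) = - (Am N $$ (i,j))"
      using ij by (simp add: Am_def scalar_prod_def sum_ind_mult)
    then show "(Bm N - Am N * (- 1\<^sub>m N)) $$ (i,j) = mat N N (\<lambda>(i,j). (if i = j then - real N else 0) + real N * (real N - 1)) $$ (i,j)"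
      using ij by (auto simp: Am_def Bm_def power2_eq_square algebra_simps)
  qed (auto simp: Am_def Bm_def)
  also have "det \<dots> = (- real N)^N * (1 + real N * (real N * (real N - 1)) / (- real N))"
    by (rule det_aIbJ) (use assms in auto)
  also have "\<dots> = (- real N)^N * (1 - real N * (real N - 1))"
    using assms by (simp add: field_simps)
  finally show ?thesis .
qed

lemma det_M_N:
  assumes "N \<ge> 1"
  shows "det (M (N+2)) = (- real N)^N * (1 - real N * (real N - 1))"
proof -
  let ?m = "(N+1)*N"
  have UVc: "Umat N * Vmat N \<in> carrier_mat ?m ?m" by (rule mult_carrier_mat[OF Umat_carrier Vmat_carrier])
  have "M (N+2) = (-1) \<cdot>\<^sub>m (1\<^sub>m ?m - Umat N * Vmat N)"
  proof -
    have dr: "dim_row (Umat N) = ?m" "dim_col (Vmat N) = ?m" by (simp_all add: Umat_def Vmat_def)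
    show ?thesis unfolding M_eq[OF assms] using UVc dr by (auto intro!: eq_matI)
  qed
  moreover have "dim_col (1\<^sub>m ?m - Umat N * Vmat N) = ?m" by (simp add: Vmat_def)
  ultimately have "det (M (N+2)) = (-1)^?m * det (1\<^sub>m ?m - Umat N * Vmat N)"
    using det_smult[of "-1" "1\<^sub>m ?m - Umat N * Vmat N"] by metis
  also have "(-1::real)^?m = 1" by (simp add: minus_one_power_iff)
  also have "det (1\<^sub>m ?m - Umat N * Vmat N) = det (1\<^sub>m (2*N+1) - Vmat N * Umat N)"
    by (rule sylvester_det[OF Umat_carrier Vmat_carrier])
  also have "\<dots> = (- real N)^N * (1 - real N * (real N - 1))"
    using K_block[OF assms] det_final_block[OF assms] by simp
  finally show ?thesis by simp
qed

theorem lemma17: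
  fixes n :: nat
  assumes "n \<ge> 3"
  shows "det (M n) = (-1) ^ (n - 3) * (real n - 2) ^ (n - 2) * ((real n)\<^sup>2 - 5 * real n + 5)
         \<and> det (M n) \<noteq> 0"
proof -
  define N where "N = n - 2"
  have N: "N \<ge> 1" "n = N + 2" using assms unfolding N_def by auto
  have d: "det (M n) = (- real N)^N * (1 - real N * (real N - 1))"
    unfolding N(2) by (rule det_M_N[OF N(1)])
  have e1: "(- real N)^N = (-1)^N * real N ^ N" by (rule power_minus)
  have e2: "(-1::real)^N = - ((-1)^(n-3))"
  proof -
    have "N = Suc (n - 3)" using N by simp
    then show ?thesis by simp
  qed
  have e3: "1 - real N * (real N - 1) = - ((real n)\<^sup>2 - 5 * real n + 5)"
    using N(2) by (simp add: power2_eq_square algebra_simps)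
  have e4: "real n - 2 = real N" "n - 2 = N" using N by auto
  have main: "det (M n) = (-1) ^ (n - 3) * real N ^ N * ((real n)\<^sup>2 - 5 * real n + 5)"
    by (simp only: d e1 e2 e3 mult_minus_left mult_minus_right minus_minus mult.assoc)
  then have main': "det (M n) = (-1) ^ (n - 3) * (real n - 2) ^ (n - 2) * ((real n)\<^sup>2 - 5 * real n + 5)"
    by (simp only: e4)
  have nz1: "real N ^ N \<noteq> 0" using N by simp
  have nz2: "1 - real N * (real N - 1) \<noteq> 0"
  proof (cases "N = 1")
    case True then show ?thesis by simp
  next
    case False
    then have "real N \<ge> 2" using N by simp
    then have "real N * (real N - 1) \<ge> 2 * 1" by (intro mult_mono) auto
    then show ?thesis by simp
  qed
  have nz3: "(-1::real)^N \<noteq> 0" by simp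
  have "det (M n) \<noteq> 0" unfolding d e1 using nz1 nz2 nz3 by (simp only: mult_eq_0_iff de_Morgan_disj) simp
  with main' show ?thesis by blast
qed


end
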